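(* Let $g,h\in K\{\{x,y\}$ with $\mathrm{ord}_x(g)\ge1$. Then there is a unique $K$-algebra homomorphism $\varphi=\varphi_{(g,h)}:K\{\{x,y\}\to K\{\{x,y\}$ (i.e. a $K$-linear map with $\varphi(1_P)=1_P$ and $\varphi(f_1\cdot\ldots\cdot f_m)=\varphi(f_1)\cdot\ldots\cdot\varphi(f_m)$ for all $m\ge2$) such that $\varphi(x)=g$, $\varphi(y)=h$, and $\varphi$ is continuous with respect to the $x$-adic topology.
   Context: Let $K$ be a field and let $x\neq y$ be two symbols (variables). A finite planar reduced rooted tree is a finite rooted tree in which the children of each vertex are linearly ordered and no vertex has exactly one child; its leaves are the vertices without children (the one-vertex tree has its root as its unique leaf). $P(x,y)$ denotes the set of isomorphism classes of pairs $S=(T,\lambda)$ with $T$ a finite planar reduced rooted tree and $\lambda:L(T)\to\{x,y\}$ a labeling of its set of leaves $L(T)$; $\deg_x(S)=\#\lambda^{-1}(x)$, $\deg_y(S)=\#\lambda^{-1}(y)$, $\deg(S)=\#L(T)$. Let $P'(x,y)=P(x,y)\cup\{1_P\}$, where $1_P$ represents the empty tree (with $\deg_x(1_P)=\deg_y(1_P)=0$). For $m\ge 2$ and $S_1,\dots,S_m\in P(x,y)$, the $m$-ary grafting $\bullet_m(S_1,\dots,S_m)$ is the labeled tree obtained by adding a new root whose ordered children are the roots of $S_1,\dots,S_m$ (in this order), with the labelings inherited. It is extended to $P'(x,y)$ by deleting occurrences of $1_P$: $\bullet_m(S_1,\dots,S_m)=\bullet_{r}(S_{j_1},\dots,S_{j_r})$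 where $S_{j_1},\dots,S_{j_r}$ are the entries different from $1_P$ (in order), with the conventions $\bullet_1(S)=S$ and $\bullet_0()=1_P$. $K\{\{x,y\}$ is the $K$-vector space of all functions $f:P'(x,y)\to K$, $S\mapsto c_S(f)$, such that for every $n\in\mathbb N$ the set $\{S: c_S(f)\ne0,\ \deg_x(S)=n\}$ is finite; one writes $f=\sum_S c_S(f)S$ and identifies $S\in P'(x,y)$ with its indicator function (so $x$ and $y$ denote the one-vertex trees labeled $x$, resp. $y$). For $m\ge2$, the product $\bullet_m(f_1,\dots,f_m)=f_1\cdot\ldots\cdot f_m$ is defined by $c_S(f_1\cdot\ldots\cdot f_m)=\sum c_{S_1}(f_1)\cdots c_{S_m}(f_m)$, summed over all $(S_1,\dots,S_m)\in P'(x,y)^m$ with $\bullet_m(S_1,\dots,S_m)=S$. For $f\ne0$, $\mathrm{ord}_x(f)=\min\{\deg_x(S): c_S(f)\neq 0\}$, and $\mathrm{ord}_x(0)=\infty$; $|f|_x=(1/2)^{\mathrm{ord}_x(f)}$ (with $|0|_x=0$), and the $x$-adic distance/topology is given by $|f-g|_x$. *)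

theory Defs
  imports Main "HOL-Library.Extended_Nat"
begin

datatype lab = LX | LY

text \<open>Planar rooted trees with labelled leaves; the children of a node are ordered (a list).
  Isomorphism classes of planar labelled trees correspond exactly to these terms.\<close>
datatype ptree = Leaf lab | Node "ptree list"

fun reduced :: "ptree \<Rightarrow> bool" where
  "reduced (Leaf l) = True"
| "reduced (Node ts) = (2 \<le> length ts \<and> (\<forall>t\<in>set ts. reduced t))"

text \<open>Elements of P'(x,y): None is the empty tree 1_P, Some t a reduced tree.\<close>
definition validP :: "ptree option \<Rightarrow> bool" where
  "validP S = (case S of None \<Rightarrow> True | Some t \<Rightarrow> reduced t)"

fun degx_t :: "ptree \<Rightarrow> nat" where
  "degx_t (Leaf l) = (if l = LX then 1 else 0)"
| "degx_t (Node ts) = sum_list (map degx_t ts)"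

definition degx :: "ptree option \<Rightarrow> nat" where
  "degx S = (case S of None \<Rightarrow> 0 | Some t \<Rightarrow> degx_t t)"

text \<open>Grafting extended to P'(x,y): delete occurrences of 1_P, with bullet_1(S) = S,
  bullet_0() = 1_P.\<close>
definition graft :: "ptree option list \<Rightarrow> ptree option" where
  "graft Ss = (let ts = map the (filter (\<lambda>S. S \<noteq> None) Ss) in
     (case ts of [] \<Rightarrow> None | [t] \<Rightarrow> Some t | _ \<Rightarrow> Some (Node ts)))"

definition KXY :: "(ptree option \<Rightarrow> 'a::field) set" where
  "KXY = {f. (\<forall>S. \<not> validP S \<longrightarrow> f S = 0) \<and>
             (\<forall>n. finite {S. validP S \<and> f S \<noteq> 0 \<and> degx S = n})}"

definition ind :: "ptree option \<Rightarrow> ptree option \<Rightarrow> 'a::field" where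
  "ind T = (\<lambda>S. if S = T then 1 else 0)"

definition oneP :: "ptree option \<Rightarrow> 'a::field" where
  "oneP = ind None"

definition varx :: "ptree option \<Rightarrow> 'a::field" where
  "varx = ind (Some (Leaf LX))"

definition vary :: "ptree option \<Rightarrow> 'a::field" where
  "vary = ind (Some (Leaf LY))"

definition mprod :: "(ptree option \<Rightarrow> 'a::field) list \<Rightarrow> ptree option \<Rightarrow> 'a" where
  "mprod fs S = (\<Sum>Ss\<in>{Ss. length Ss = length fs \<and> (\<forall>T\<in>set Ss. validP T) \<and> graft Ss = S}.
                    \<Prod>i<length fs. (fs ! i) (Ss ! i))"

definition ordx :: "(ptree option \<Rightarrow> 'a::field) \<Rightarrow> enat" where
  "ordx f = (if f = (\<lambda>_. 0) then \<infinity>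
             else enat (LEAST n. \<exists>S. validP S \<and> f S \<noteq> 0 \<and> degx S = n))"

definition absx :: "(ptree option \<Rightarrow> 'a::field) \<Rightarrow> real" where
  "absx f = (if f = (\<lambda>_. 0) then 0 else (1/2) ^ (the_enat (ordx f)))"

definition alg_hom :: "((ptree option \<Rightarrow> 'a::field) \<Rightarrow> (ptree option \<Rightarrow> 'a)) \<Rightarrow> bool" where
  "alg_hom \<phi> = ((\<forall>f\<in>KXY. \<phi> f \<in> KXY) \<and>
     (\<forall>f\<in>KXY. \<forall>g\<in>KXY. \<forall>a b. \<phi> (\<lambda>S. a * f S + b * g S) = (\<lambda>S. a * \<phi> f S + b * \<phi> g S)) \<and>
     \<phi> oneP = oneP \<and>
     (\<forall>fs. 2 \<le> length fs \<longrightarrow> set fs \<subseteq> KXY \<longrightarrow> \<phi> (mprod fs) = mprod (map \<phi> fs)))"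

definition xadic_continuous :: "((ptree option \<Rightarrow> 'a::field) \<Rightarrow> (ptree option \<Rightarrow> 'a)) \<Rightarrow> bool" where
  "xadic_continuous \<phi> = (\<forall>f\<in>KXY. \<forall>e>0. \<exists>d>0. \<forall>g\<in>KXY.
       absx (\<lambda>S. g S - f S) < d \<longrightarrow> absx (\<lambda>S. \<phi> g S - \<phi> f S) < e)"

end

theory Submission
  imports Defs "HOL-Library.FuncSet"
begin

definition Dset :: "nat \<Rightarrow> ptree option \<Rightarrow> ptree option list set" where
  "Dset m T = {Ss. length Ss = m \<and> (\<forall>T\<in>set Ss. validP T) \<and> graft Ss = T}"

lemma mprod_Dset: "mprod fs S = (\<Sum>Ss\<in>Dset (length fs) S. \<Prod>i<length fs. (fs ! i) (Ss ! i))"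
  unfolding mprod_def Dset_def by simp

definition flt :: "ptree option list \<Rightarrow> ptree list" where
  "flt Ss = map the (filter (\<lambda>S. S \<noteq> None) Ss)"

lemma graft_flt: "graft Ss = (case flt Ss of [] \<Rightarrow> None | [t] \<Rightarrow> Some t | _ \<Rightarrow> Some (Node (flt Ss)))"
  unfolding graft_def flt_def Let_def by simp

lemma set_flt: "Some t \<in> set Ss \<Longrightarrow> t \<in> set (flt Ss)"
  unfolding flt_def by force

lemma set_flt2: "t \<in> set (flt Ss) \<Longrightarrow> Some t \<in> set Ss"
  unfolding flt_def by auto

lemma graft_valid: "\<forall>S\<in>set Ss. validP S \<Longrightarrow> validP (graft Ss)"
proof -
  assume a: "\<forall>S\<in>set Ss. validP S"
  have r: "\<forall>t\<in>set (flt Ss). reduced t" using a set_flt2 unfolding validP_def by fastforce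
  show ?thesis
  proof (cases "flt Ss")
    case Nil then show ?thesis by (simp add: graft_flt validP_def)
  next
    case (Cons t ts)
    then show ?thesis using r by (cases ts) (auto simp: graft_flt validP_def)
  qed
qed

lemma degx_None[simp]: "degx None = 0" by (simp add: degx_def)
lemma degx_Some[simp]: "degx (Some t) = degx_t t" by (simp add: degx_def)

lemma sum_degx_flt: "sum_list (map degx Ss) = sum_list (map degx_t (flt Ss))"
  by (induction Ss) (auto simp: flt_def)

lemma degx_graft: "degx (graft Ss) = sum_list (map degx Ss)"
proof (cases "flt Ss")
  case Nil then show ?thesis by (simp add: graft_flt sum_degx_flt)
next
  case (Cons t ts)
  then show ?thesis by (cases ts) (auto simp: graft_flt sum_degx_flt)
qed

lemma degx_le_graft: "S \<in> set Ss \<Longrightarrow> degx S \<le> degx (graft Ss)"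
  by (simp add: degx_graft member_le_sum_list)

lemma graft_mem: "S \<in> set Ss \<Longrightarrow> S \<in> {None, graft Ss} \<union> (case graft Ss of Some (Node ts) \<Rightarrow> Some ` set ts | _ \<Rightarrow> {})"
proof (cases S)
  case (Some t)
  assume "S \<in> set Ss"
  then have t: "t \<in> set (flt Ss)" using Some set_flt by auto
  show ?thesis
  proof (cases "flt Ss")
    case Nil then show ?thesis using t by simp
  next
    case (Cons t1 ts)
    then show ?thesis using t Some by (cases ts) (auto simp: graft_flt)
  qed
qed simp

lemma finite_Dset: "finite (Dset m T)"
proof -
  let ?C = "{None, T} \<union> (case T of Some (Node ts) \<Rightarrow> Some ` set ts | _ \<Rightarrow> {})"
  have "finite ?C" by (auto split: option.splits ptree.splits)
  moreover have "Dset m T \<subseteq> {Ss. set Ss \<subseteq> ?C \<and> length Ss = m}"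
    unfolding Dset_def using graft_mem by fastforce
  ultimately show ?thesis using finite_lists_length_eq finite_subset by blast
qed

lemma Dset_valid: "Ss \<in> Dset m T \<Longrightarrow> validP T"
  unfolding Dset_def using graft_valid by auto


definition PP :: "(ptree option \<Rightarrow> 'a::field) list \<Rightarrow> ptree option list \<Rightarrow> 'a" where
  "PP fs Ss = prod_list (map2 (\<lambda>f s. f s) fs Ss)"

lemma prod_PP: "length fs = length Ss \<Longrightarrow> (\<Prod>i<length fs. (fs ! i) (Ss ! i)) = PP fs Ss"
proof (induction fs Ss rule: list_induct2)
  case Nil then show ?case by (simp add: PP_def)
next
  case (Cons x xs y ys)
  then show ?case by (simp add: PP_def prod.lessThan_Suc_shift del: prod.lessThan_Suc)
qed

lemma mprod_PP: "mprod fs S = (\<Sum>Ss\<in>Dset (length fs) S. PP fs Ss)"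
  unfolding mprod_Dset by (rule sum.cong) (auto simp: Dset_def prod_PP)

lemma PP_append: "length xs = length as \<Longrightarrow> PP (xs @ ys) (as @ bs) = PP xs as * PP ys bs"
  by (simp add: PP_def zip_append)

lemma PP_Cons: "PP (x # xs) (a # as) = x a * PP xs as"
  by (simp add: PP_def)

lemma graft_ins: "graft (as @ None # bs) = graft (as @ bs)"
  by (simp add: graft_def)

lemma oneP_app: "oneP S = (if S = None then 1 else 0)"
  by (simp add: oneP_def ind_def)

lemma mprod_del: "mprod (xs @ oneP # ys) = mprod (xs @ ys)"
proof
  fix S
  let ?k = "length xs" and ?m = "length xs + length ys"
  define ins where "ins Ss = take ?k Ss @ None # drop ?k Ss" for Ss :: "ptree option list"
  have len: "length (xs @ oneP # ys) = Suc ?m" "length (xs @ ys) = ?m" by simp_all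
  have sub: "ins ` Dset ?m S \<subseteq> Dset (Suc ?m) S"
  proof
    fix U assume "U \<in> ins ` Dset ?m S"
    then obtain Ss where Ss: "Ss \<in> Dset ?m S" "U = ins Ss" by blast
    then show "U \<in> Dset (Suc ?m) S"
      unfolding Dset_def ins_def
      using graft_ins[of "take ?k Ss" "drop ?k Ss"]
      by (auto simp: validP_def dest: in_set_takeD in_set_dropD)
  qed
  have zero: "PP (xs @ oneP # ys) U = 0" if U: "U \<in> Dset (Suc ?m) S - ins ` Dset ?m S" for U
  proof -
    have lU: "length U = Suc ?m" using U by (simp add: Dset_def)
    have dec: "U = take ?k U @ U ! ?k # drop (Suc ?k) U"
      using lU by (simp add: id_take_nth_drop)
    have "U ! ?k \<noteq> None"
    proof
      assume N: "U ! ?k = None"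
      let ?V = "take ?k U @ drop (Suc ?k) U"
      have "ins ?V = U" using lU N dec unfolding ins_def by (simp add: min_def)
      moreover have "?V \<in> Dset ?m S"
      proof -
        have "graft ?V = graft U" using dec N graft_ins[of "take ?k U" "drop (Suc ?k) U"] by simp
        moreover have "\<forall>T\<in>set ?V. validP T" using U unfolding Dset_def
          by (auto dest: in_set_takeD in_set_dropD)
        ultimately show ?thesis using U lU unfolding Dset_def by auto
      qed
      ultimately have "U \<in> ins ` Dset ?m S" by (metis image_eqI)
      then show False using U by blast
    qed
    then have "PP (xs @ oneP # ys) (take ?k U @ U ! ?k # drop (Suc ?k) U) = 0"
      using lU by (subst PP_append) (auto simp: PP_Cons oneP_app)
    then show ?thesis using dec by simp
  qed
  have inj: "inj_on ins (Dset ?m S)"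
  proof
    fix a b assume a: "a \<in> Dset ?m S" and b: "b \<in> Dset ?m S" and e: "ins a = ins b"
    have la: "length a = ?m" and lb: "length b = ?m" using a b by (auto simp: Dset_def)
    have "take ?k a = take ?k b" using e la lb unfolding ins_def
      by (metis (no_types, lifting) append_eq_append_conv length_take)
    moreover have "drop ?k a = drop ?k b" using e la lb unfolding ins_def
      by (metis (no_types, lifting) append_eq_append_conv length_take list.inject)
    ultimately show "a = b" by (metis append_take_drop_id)
  qed
  have "mprod (xs @ oneP # ys) S = (\<Sum>U\<in>Dset (Suc ?m) S. PP (xs @ oneP # ys) U)"
    by (simp add: mprod_PP)
  also have "\<dots> = (\<Sum>U\<in>ins ` Dset ?m S. PP (xs @ oneP # ys) U)"
    using sub zero finite_Dset by (intro sum.mono_neutral_right) auto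
  also have "\<dots> = (\<Sum>Ss\<in>Dset ?m S. PP (xs @ oneP # ys) (ins Ss))"
    using inj by (simp add: sum.reindex)
  also have "\<dots> = (\<Sum>Ss\<in>Dset ?m S. PP (xs @ ys) Ss)"
  proof (rule sum.cong)
    fix Ss assume "Ss \<in> Dset ?m S"
    then have l: "length Ss = ?m" by (simp add: Dset_def)
    have "PP (xs @ oneP # ys) (ins Ss) = PP xs (take ?k Ss) * PP (oneP # ys) (None # drop ?k Ss)"
      unfolding ins_def using l by (intro PP_append) simp
    also have "\<dots> = PP xs (take ?k Ss) * PP ys (drop ?k Ss)" by (simp add: PP_Cons oneP_app)
    also have "\<dots> = PP (xs @ ys) (take ?k Ss @ drop ?k Ss)"
      using l by (subst PP_append) simp_all
    finally show "PP (xs @ oneP # ys) (ins Ss) = PP (xs @ ys) Ss" by simp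
  qed simp
  also have "\<dots> = mprod (xs @ ys) S" by (simp add: mprod_PP)
  finally show "mprod (xs @ oneP # ys) S = mprod (xs @ ys) S" .
qed

lemma mprod_Nil: "mprod [] = oneP"
proof
  fix S
  have "Dset 0 S = (if S = None then {[]} else {})" by (auto simp: Dset_def graft_def)
  then show "mprod [] S = oneP S" by (simp add: mprod_PP oneP_app PP_def)
qed

lemma mprod_single: "(\<And>S. \<not> validP S \<Longrightarrow> f S = 0) \<Longrightarrow> mprod [f] = f"
proof
  fix S assume v: "\<And>S. \<not> validP S \<Longrightarrow> f S = 0"
  have g1: "graft [T] = T" for T by (cases T) (auto simp: graft_def)
  have "Dset 1 S = (if validP S then {[S]} else {})"
    by (auto simp: Dset_def g1 length_Suc_conv)
  then show "mprod [f] S = f S" using v by (simp add: mprod_PP PP_def)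
qed


lemma supp_finite:
  assumes "f \<in> KXY" shows "finite {S. validP S \<and> f S \<noteq> 0 \<and> degx S \<le> n}"
proof -
  have "{S. validP S \<and> f S \<noteq> 0 \<and> degx S \<le> n} = (\<Union>k\<le>n. {S. validP S \<and> f S \<noteq> 0 \<and> degx S = k})"
    by auto
  moreover have "\<forall>k. finite {S. validP S \<and> f S \<noteq> 0 \<and> degx S = k}"
    using assms unfolding KXY_def by blast
  ultimately show ?thesis by simp
qed

lemma nonzero_mprod:
  assumes "mprod fs T \<noteq> 0"
  shows "\<exists>Ss\<in>Dset (length fs) T. \<forall>i<length fs. (fs ! i) (Ss ! i) \<noteq> 0"
proof -
  have "(\<Sum>Ss\<in>Dset (length fs) T. \<Prod>i<length fs. (fs ! i) (Ss ! i)) \<noteq> 0"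
    using assms unfolding mprod_Dset .
  then obtain Ss where Ss: "Ss \<in> Dset (length fs) T" "(\<Prod>i<length fs. (fs ! i) (Ss ! i)) \<noteq> 0"
    by (rule sum.not_neutral_contains_not_neutral)
  have "\<forall>i<length fs. (fs ! i) (Ss ! i) \<noteq> 0"
  proof (intro allI impI)
    fix i assume "i < length fs"
    then show "(fs ! i) (Ss ! i) \<noteq> 0" using Ss(2) prod_zero[of "{..<length fs}"] by auto
  qed
  then show ?thesis using Ss(1) by blast
qed

lemma mprod_KXY:
  assumes "set fs \<subseteq> KXY" shows "mprod fs \<in> KXY"
proof -
  have van: "mprod fs T = 0" if "\<not> validP T" for T
  proof -
    have "Dset (length fs) T = {}" using that Dset_valid by blast
    then show ?thesis by (simp add: mprod_Dset)
  qed
  have fin: "finite {T. validP T \<and> mprod fs T \<noteq> 0 \<and> degx T = n}" for n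
  proof -
    let ?U = "\<Union>f\<in>set fs. {S. validP S \<and> f S \<noteq> 0 \<and> degx S \<le> n}"
    have fU: "finite ?U" using assms by (auto intro!: supp_finite)
    have "{T. validP T \<and> mprod fs T \<noteq> 0 \<and> degx T = n} \<subseteq> graft ` {Ss. set Ss \<subseteq> ?U \<and> length Ss = length fs}"
    proof
      fix T assume T: "T \<in> {T. validP T \<and> mprod fs T \<noteq> 0 \<and> degx T = n}"
      then obtain Ss where Ss: "Ss \<in> Dset (length fs) T" "\<forall>i<length fs. (fs ! i) (Ss ! i) \<noteq> 0"
        using nonzero_mprod by blast
      have l: "length Ss = length fs" and g: "graft Ss = T" and v: "\<forall>S\<in>set Ss. validP S"
        using Ss by (auto simp: Dset_def)
      have "set Ss \<subseteq> ?U"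
      proof
        fix S assume S: "S \<in> set Ss"
        then obtain i where i: "i < length Ss" "S = Ss ! i" by (auto simp: in_set_conv_nth)
        have "degx S \<le> n" using degx_le_graft[OF S] g T by simp
        moreover have "fs ! i \<in> set fs" "(fs ! i) S \<noteq> 0" using i l Ss(2) by auto
        ultimately show "S \<in> ?U" using v S by blast
      qed
      then show "T \<in> graft ` {Ss. set Ss \<subseteq> ?U \<and> length Ss = length fs}" using l g by blast
    qed
    moreover have "finite (graft ` {Ss. set Ss \<subseteq> ?U \<and> length Ss = length fs})"
      using fU by (intro finite_imageI finite_lists_length_eq)
    ultimately show ?thesis by (rule finite_subset)
  qed
  show ?thesis unfolding KXY_def using van fin by blast
qed

lemma mprod_ind:
  assumes "\<forall>S\<in>set Ss0. validP S" shows "mprod (map ind Ss0) = ind (graft Ss0)"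
proof
  fix T
  let ?m = "length Ss0"
  have "mprod (map ind Ss0) T = (\<Sum>Ss\<in>Dset ?m T. \<Prod>i<?m. ind (Ss0 ! i) (Ss ! i))"
    unfolding mprod_Dset length_map by (intro sum.cong refl prod.cong) auto
  also have "\<dots> = (\<Sum>Ss\<in>Dset ?m T. if Ss = Ss0 then 1 else 0)"
  proof (rule sum.cong)
    fix Ss assume "Ss \<in> Dset ?m T"
    then have l: "length Ss = ?m" by (simp add: Dset_def)
    show "(\<Prod>i<?m. ind (Ss0 ! i) (Ss ! i)) = (if Ss = Ss0 then 1 else 0)"
    proof (cases "Ss = Ss0")
      case True then show ?thesis by (simp add: ind_def)
    next
      case False
      then obtain i where i: "i < ?m" "Ss ! i \<noteq> Ss0 ! i" by (metis l nth_equalityI)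
      have "ind (Ss0 ! i) (Ss ! i) = 0" using i by (simp add: ind_def)
      then have "(\<Prod>i<?m. ind (Ss0 ! i) (Ss ! i)) = 0" using i(1) by (intro prod_zero) auto
      then show ?thesis using False by simp
    qed
  qed simp
  also have "\<dots> = ind (graft Ss0) T"
    using finite_Dset assms by (simp add: ind_def Dset_def)
  finally show "mprod (map ind Ss0) T = ind (graft Ss0) T" .
qed

lemma mprod_scalar:
  "mprod (map (\<lambda>i U. c i * H i U) [0..<m]) T = (\<Prod>i<m. c i) * mprod (map H [0..<m]) T"
proof -
  have "mprod (map (\<lambda>i U. c i * H i U) [0..<m]) T = (\<Sum>Ss\<in>Dset m T. \<Prod>i<m. c i * H i (Ss ! i))"
    unfolding mprod_Dset by (intro sum.cong prod.cong) auto
  also have "\<dots> = (\<Sum>Ss\<in>Dset m T. (\<Prod>i<m. c i) * (\<Prod>i<m. H i (Ss ! i)))"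
    by (simp add: prod.distrib)
  also have "\<dots> = (\<Prod>i<m. c i) * (\<Sum>Ss\<in>Dset m T. \<Prod>i<m. H i (Ss ! i))"
    by (simp add: sum_distrib_left)
  also have "\<dots> = (\<Prod>i<m. c i) * mprod (map H [0..<m]) T"
    unfolding mprod_Dset by (intro arg_cong2[where f="(*)"] refl sum.cong prod.cong) auto
  finally show ?thesis .
qed

lemma mprod_multilin:
  assumes "\<And>i. i < m \<Longrightarrow> finite (A i)"
  shows "mprod (map (\<lambda>i U. \<Sum>a\<in>A i. G i a U) [0..<m]) T =
         (\<Sum>\<sigma>\<in>PiE {..<m} A. mprod (map (\<lambda>i. G i (\<sigma> i)) [0..<m]) T)"
proof -
  have "mprod (map (\<lambda>i U. \<Sum>a\<in>A i. G i a U) [0..<m]) T =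
        (\<Sum>Ss\<in>Dset m T. \<Prod>i<m. \<Sum>a\<in>A i. G i a (Ss ! i))"
    unfolding mprod_Dset by (intro sum.cong prod.cong) auto
  also have "\<dots> = (\<Sum>Ss\<in>Dset m T. \<Sum>\<sigma>\<in>PiE {..<m} A. \<Prod>i<m. G i (\<sigma> i) (Ss ! i))"
    using assms by (intro sum.cong refl prod_sum_PiE) auto
  also have "\<dots> = (\<Sum>\<sigma>\<in>PiE {..<m} A. \<Sum>Ss\<in>Dset m T. \<Prod>i<m. G i (\<sigma> i) (Ss ! i))"
    by (rule sum.swap)
  also have "\<dots> = (\<Sum>\<sigma>\<in>PiE {..<m} A. mprod (map (\<lambda>i. G i (\<sigma> i)) [0..<m]) T)"
    unfolding mprod_Dset by (intro sum.cong prod.cong) auto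
  finally show ?thesis .
qed

lemma mprod_local:
  assumes "length fs = length gs" "degx T \<le> n"
    and "\<And>i S. i < length fs \<Longrightarrow> validP S \<Longrightarrow> degx S \<le> n \<Longrightarrow> (fs ! i) S = (gs ! i) S"
  shows "mprod fs T = mprod gs T"
  unfolding mprod_Dset assms(1)[symmetric]
proof (intro sum.cong refl prod.cong)
  fix Ss i assume Ss: "Ss \<in> Dset (length fs) T" and i: "i \<in> {..<length fs}"
  then have "Ss ! i \<in> set Ss" by (auto simp: Dset_def)
  moreover have "graft Ss = T" "\<forall>S\<in>set Ss. validP S" using Ss by (auto simp: Dset_def)
  ultimately have "degx (Ss ! i) \<le> n" "validP (Ss ! i)"
    using degx_le_graft[of "Ss ! i" Ss] assms(2) by auto
  then show "(fs ! i) (Ss ! i) = (gs ! i) (Ss ! i)" using assms(3) i by auto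
qed


lemma sum_list_mono2:
  "length xs = length ys \<Longrightarrow> (\<And>i. i < length xs \<Longrightarrow> f (xs ! i) \<le> (g (ys ! i) :: nat)) \<Longrightarrow>
   sum_list (map f xs) \<le> sum_list (map g ys)"
proof (induction xs ys rule: list_induct2)
  case Nil then show ?case by simp
next
  case (Cons x xs y ys)
  have "f x \<le> g y" using Cons.prems[of 0] by simp
  moreover have "sum_list (map f xs) \<le> sum_list (map g ys)"
    using Cons.IH Cons.prems[of "Suc _"] by simp
  ultimately show ?case by simp
qed

definition trunc :: "nat \<Rightarrow> (ptree option \<Rightarrow> 'a::field) \<Rightarrow> ptree option \<Rightarrow> 'a" where
  "trunc n f = (\<lambda>S. if degx S \<le> n then f S else 0)"

lemma trunc_KXY: "f \<in> KXY \<Longrightarrow> trunc n f \<in> KXY"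
proof -
  assume f: "f \<in> KXY"
  have "{S. validP S \<and> trunc n f S \<noteq> 0 \<and> degx S = k} \<subseteq> {S. validP S \<and> f S \<noteq> 0 \<and> degx S = k}" for k
    by (auto simp: trunc_def)
  moreover have "\<forall>k. finite {S. validP S \<and> f S \<noteq> 0 \<and> degx S = k}" using f unfolding KXY_def by blast
  ultimately have "finite {S. validP S \<and> trunc n f S \<noteq> 0 \<and> degx S = k}" for k
    by (meson finite_subset)
  moreover have "\<forall>S. \<not> validP S \<longrightarrow> trunc n f S = 0" using f unfolding KXY_def trunc_def by auto
  ultimately show ?thesis unfolding KXY_def by blast
qed

lemma ind_KXY: "validP T \<Longrightarrow> ind T \<in> KXY"
proof -
  assume v: "validP T"
  have s: "{S. validP S \<and> (ind T::_\<Rightarrow>'a) S \<noteq> 0 \<and> degx S = n} \<subseteq> {T}" for n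
    by (auto simp: ind_def)
  show "(ind T::_\<Rightarrow>'a) \<in> KXY" unfolding KXY_def
    using finite_subset[OF s] v by (auto simp: ind_def)
qed

lemma lin_KXY: "f \<in> KXY \<Longrightarrow> k \<in> KXY \<Longrightarrow> (\<lambda>S. a * f S + b * k S) \<in> KXY"
proof -
  assume f: "f \<in> KXY" and k: "k \<in> KXY"
  have "{S. validP S \<and> a * f S + b * k S \<noteq> 0 \<and> degx S = n} \<subseteq>
        {S. validP S \<and> f S \<noteq> 0 \<and> degx S = n} \<union> {S. validP S \<and> k S \<noteq> 0 \<and> degx S = n}" for n
    by auto
  moreover have "\<forall>k. finite {S. validP S \<and> f S \<noteq> 0 \<and> degx S = k}" using f unfolding KXY_def by blast
  moreover have "\<forall>j. finite {S. validP S \<and> k S \<noteq> 0 \<and> degx S = j}" using k unfolding KXY_def by blast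
  ultimately have "finite {S. validP S \<and> a * f S + b * k S \<noteq> 0 \<and> degx S = n}" for n
    by (meson finite_UnI finite_subset)
  moreover have "\<forall>S. \<not> validP S \<longrightarrow> a * f S + b * k S = 0" using f k unfolding KXY_def by auto
  ultimately show ?thesis unfolding KXY_def by blast
qed

lemma absx_small:
  assumes v: "\<And>S. \<not> validP S \<Longrightarrow> w S = 0" and a: "absx w < (1/2) ^ n"
    and S: "validP S" "degx S \<le> n"
  shows "w S = 0"
proof (rule ccontr)
  assume w: "w S \<noteq> 0"
  then have nz: "w \<noteq> (\<lambda>_. 0)" by auto
  let ?L = "LEAST k. \<exists>S. validP S \<and> w S \<noteq> 0 \<and> degx S = k"
  have "?L \<le> degx S" using w S by (intro Least_le) blast
  then have "?L \<le> n" using S by simp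
  then have "(1/2::real) ^ n \<le> (1/2) ^ ?L" by (rule power_decreasing) auto
  moreover have "absx w = (1/2) ^ ?L" using nz unfolding absx_def ordx_def by simp
  ultimately show False using a by simp
qed

lemma absx_le:
  assumes v: "\<And>S. \<not> validP S \<Longrightarrow> w S = 0" and z: "\<And>S. validP S \<Longrightarrow> degx S \<le> n \<Longrightarrow> w S = 0"
  shows "absx w \<le> (1/2) ^ Suc n"
proof (cases "w = (\<lambda>_. 0)")
  case True then show ?thesis unfolding absx_def by simp
next
  case False
  then obtain S where S: "w S \<noteq> 0" by auto
  then have "validP S" using v by blast
  let ?P = "\<lambda>k. \<exists>S. validP S \<and> w S \<noteq> 0 \<and> degx S = k"
  have "?P (degx S)" using S \<open>validP S\<close> by blast
  then have "?P (Least ?P)" by (rule LeastI)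
  then obtain S' where S': "validP S'" "w S' \<noteq> 0" "degx S' = Least ?P" by blast
  have "\<not> degx S' \<le> n" using z[OF S'(1)] S'(2) by blast
  then have "n < Least ?P" using S'(3) by simp
  then have "(1/2::real) ^ Least ?P \<le> (1/2) ^ Suc n" by (intro power_decreasing) auto
  moreover have "absx w = (1/2) ^ Least ?P" using False unfolding absx_def ordx_def by simp
  ultimately show ?thesis by simp
qed

locale subst =
  fixes g h :: "ptree option \<Rightarrow> 'a::field"
  assumes gK: "g \<in> KXY" and hK: "h \<in> KXY" and gdeg: "\<And>S. g S \<noteq> 0 \<Longrightarrow> 1 \<le> degx S"
begin

fun Phit :: "ptree \<Rightarrow> ptree option \<Rightarrow> 'a" where
  "Phit (Leaf l) = (if l = LX then g else h)"
| "Phit (Node ts) = mprod (map Phit ts)"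

definition PhiO :: "ptree option \<Rightarrow> ptree option \<Rightarrow> 'a" where
  "PhiO S = (case S of None \<Rightarrow> oneP | Some t \<Rightarrow> Phit t)"

lemma PhiO_simps[simp]: "PhiO None = oneP" "PhiO (Some t) = Phit t"
  by (simp_all add: PhiO_def)

lemma Phit_props: "Phit t \<in> KXY \<and> (\<forall>T. Phit t T \<noteq> 0 \<longrightarrow> degx_t t \<le> degx T)"
proof (induction t)
  case (Leaf l)
  then show ?case using gK hK gdeg by (cases l) auto
next
  case (Node ts)
  have K: "Phit (Node ts) \<in> KXY" using Node by (auto intro!: mprod_KXY)
  have "degx_t (Node ts) \<le> degx T" if T: "Phit (Node ts) T \<noteq> 0" for T
  proof -
    obtain Ss where Ss: "Ss \<in> Dset (length ts) T" "\<forall>i<length ts. Phit (ts ! i) (Ss ! i) \<noteq> 0"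
      using nonzero_mprod[of "map Phit ts" T] T by auto
    have l: "length Ss = length ts" and gr: "graft Ss = T" using Ss by (auto simp: Dset_def)
    have "sum_list (map degx_t ts) \<le> sum_list (map degx Ss)"
    proof (rule sum_list_mono2)
      fix i assume i: "i < length ts"
      then have "ts ! i \<in> set ts" by simp
      then show "degx_t (ts ! i) \<le> degx (Ss ! i)" using Node.IH Ss(2) i by blast
    qed (use l in simp)
    then show ?thesis using gr degx_graft[of Ss] by simp
  qed
  then show ?case using K by blast
qed

lemma Phit_K: "Phit t \<in> KXY" using Phit_props by blast
lemma Phit_deg: "Phit t T \<noteq> 0 \<Longrightarrow> degx_t t \<le> degx T" using Phit_props by blast

lemma Phit_van: "\<not> validP S \<Longrightarrow> Phit t S = 0"
  using Phit_K[of t] unfolding KXY_def by blast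

lemma PhiO_deg: "PhiO S T \<noteq> 0 \<Longrightarrow> degx S \<le> degx T"
  by (cases S) (auto simp: PhiO_def oneP_app Phit_deg)

lemma PhiO_K: "PhiO S \<in> KXY"
proof (cases S)
  case None
  have s: "{S. validP S \<and> (oneP::_\<Rightarrow>'a) S \<noteq> 0 \<and> degx S = n} \<subseteq> {None}" for n
    by (auto simp: oneP_app)
  have "(oneP::_\<Rightarrow>'a) \<in> KXY" unfolding KXY_def
    using finite_subset[OF s] by (auto simp: oneP_app validP_def)
  then show ?thesis using None by (simp add: PhiO_def)
qed (simp add: PhiO_def Phit_K)

lemma mprod_flt: "mprod (xs @ map PhiO Ss) = mprod (xs @ map Phit (flt Ss))"
proof (induction Ss arbitrary: xs)
  case Nil then show ?case by (simp add: flt_def)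
next
  case (Cons S Ss)
  show ?case
  proof (cases S)
    case None
    then have "flt (S # Ss) = flt Ss" by (simp add: flt_def)
    then show ?thesis using Cons.IH[of xs] mprod_del[of xs "map PhiO Ss"] None by simp
  next
    case (Some t)
    then have "flt (S # Ss) = t # flt Ss" by (simp add: flt_def)
    then show ?thesis using Cons.IH[of "xs @ [Phit t]"] Some by simp
  qed
qed

lemma PhiO_graft: "PhiO (graft Ss) = mprod (map PhiO Ss)"
proof -
  have e: "mprod (map PhiO Ss) = mprod (map Phit (flt Ss))" using mprod_flt[of "[]" Ss] by simp
  show ?thesis
  proof (cases "flt Ss")
    case Nil then show ?thesis using e by (simp add: graft_flt PhiO_def mprod_Nil)
  next
    case (Cons t ts)
    show ?thesis
    proof (cases ts)
      case Nil
      then show ?thesis using e Cons by (simp add: graft_flt PhiO_def mprod_single Phit_van)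
    next
      case (Cons t2 ts2)
      then show ?thesis using e \<open>flt Ss = t # ts\<close> by (simp add: graft_flt PhiO_def)
    qed
  qed
qed

definition phi :: "(ptree option \<Rightarrow> 'a) \<Rightarrow> ptree option \<Rightarrow> 'a" where
  "phi f T = (\<Sum>S\<in>{S. validP S \<and> f S \<noteq> 0 \<and> degx S \<le> degx T}. f S * PhiO S T)"

lemma phi_eq:
  assumes "f \<in> KXY" "finite B" "{S. validP S \<and> f S \<noteq> 0 \<and> degx S \<le> degx T} \<subseteq> B"
  shows "phi f T = (\<Sum>S\<in>B. f S * PhiO S T)"
  unfolding phi_def
proof (rule sum.mono_neutral_right[symmetric])
  show "\<forall>S\<in>B - {S. validP S \<and> f S \<noteq> 0 \<and> degx S \<le> degx T}. f S * PhiO S T = 0"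
  proof
    fix S assume S: "S \<in> B - {S. validP S \<and> f S \<noteq> 0 \<and> degx S \<le> degx T}"
    show "f S * PhiO S T = 0"
    proof (cases "validP S \<and> f S \<noteq> 0")
      case True
      then have "\<not> degx S \<le> degx T" using S by blast
      then show ?thesis using PhiO_deg by fastforce
    next
      case False
      then show ?thesis using assms(1) unfolding KXY_def by auto
    qed
  qed
qed (use assms in auto)


lemma phi_K: assumes f: "f \<in> KXY" shows "phi f \<in> KXY"
proof -
  have van: "phi f T = 0" if "\<not> validP T" for T
    unfolding phi_def using that PhiO_K unfolding KXY_def by (auto intro!: sum.neutral)
  have fin: "finite {T. validP T \<and> phi f T \<noteq> 0 \<and> degx T = n}" for n
  proof (rule finite_subset)
    show "{T. validP T \<and> phi f T \<noteq> 0 \<and> degx T = n} \<subseteq>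
          (\<Union>S\<in>{S. validP S \<and> f S \<noteq> 0 \<and> degx S \<le> n}. {T. validP T \<and> PhiO S T \<noteq> 0 \<and> degx T = n})"
    proof
      fix T assume T: "T \<in> {T. validP T \<and> phi f T \<noteq> 0 \<and> degx T = n}"
      then have dT: "degx T = n" and p: "phi f T \<noteq> 0" by auto
      from p have "(\<Sum>S\<in>{S. validP S \<and> f S \<noteq> 0 \<and> degx S \<le> n}. f S * PhiO S T) \<noteq> 0"
        unfolding phi_def dT .
      then obtain S where "S \<in> {S. validP S \<and> f S \<noteq> 0 \<and> degx S \<le> n}" "f S * PhiO S T \<noteq> 0"
        by (rule sum.not_neutral_contains_not_neutral)
      then show "T \<in> (\<Union>S\<in>{S. validP S \<and> f S \<noteq> 0 \<and> degx S \<le> n}. {T. validP T \<and> PhiO S T \<noteq> 0 \<and> degx T = n})"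
        using T by auto
    qed
    show "finite (\<Union>S\<in>{S. validP S \<and> f S \<noteq> 0 \<and> degx S \<le> n}. {T. validP T \<and> PhiO S T \<noteq> 0 \<and> degx T = n})"
    proof (rule finite_UN_I)
      show "finite {S. validP S \<and> f S \<noteq> 0 \<and> degx S \<le> n}" by (rule supp_finite[OF f])
      fix S show "finite {T. validP T \<and> PhiO S T \<noteq> 0 \<and> degx T = n}"
        using PhiO_K[of S] unfolding KXY_def by blast
    qed
  qed
  show ?thesis unfolding KXY_def using van fin by blast
qed

lemma phi_lin:
  assumes f: "f \<in> KXY" and k: "k \<in> KXY"
  shows "phi (\<lambda>S. a * f S + b * k S) = (\<lambda>T. a * phi f T + b * phi k T)"
proof
  fix T
  let ?B = "{S. validP S \<and> f S \<noteq> 0 \<and> degx S \<le> degx T} \<union> {S. validP S \<and> k S \<noteq> 0 \<and> degx S \<le> degx T}"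
  have fB: "finite ?B" using supp_finite[OF f] supp_finite[OF k] by (rule finite_UnI)
  have lK: "(\<lambda>S. a * f S + b * k S) \<in> KXY" using lin_KXY f k .
  have "phi (\<lambda>S. a * f S + b * k S) T = (\<Sum>S\<in>?B. (a * f S + b * k S) * PhiO S T)"
    by (rule phi_eq[OF lK fB]) auto
  also have "\<dots> = a * (\<Sum>S\<in>?B. f S * PhiO S T) + b * (\<Sum>S\<in>?B. k S * PhiO S T)"
    by (simp add: sum.distrib sum_distrib_left algebra_simps)
  also have "\<dots> = a * phi f T + b * phi k T"
    using phi_eq[OF f fB] phi_eq[OF k fB] by auto
  finally show "phi (\<lambda>S. a * f S + b * k S) T = a * phi f T + b * phi k T" .
qed

lemma phi_ind: assumes "validP S0" shows "phi (ind S0) = PhiO S0"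
proof
  fix T
  have "phi (ind S0) T = (\<Sum>S\<in>{S0}. ind S0 S * PhiO S T)"
    by (rule phi_eq[OF ind_KXY[OF assms]]) (auto simp: ind_def)
  then show "phi (ind S0) T = PhiO S0 T" by (simp add: ind_def)
qed

lemma phi_trunc: "degx T \<le> n \<Longrightarrow> phi (trunc n f) T = phi f T"
  unfolding phi_def trunc_def by (intro sum.cong) auto

lemma phi_fin:
  assumes K: "set fs \<subseteq> KXY" and fin: "\<And>f. f \<in> set fs \<Longrightarrow> finite {S. validP S \<and> f S \<noteq> 0}"
  shows "phi (mprod fs) T = mprod (map phi fs) T"
proof -
  define m where "m = length fs"
  define A where "A i = {S. validP S \<and> (fs ! i) S \<noteq> 0}" for i
  have fA: "finite (A i)" if "i < m" for i using fin that unfolding A_def m_def by auto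
  have fiK: "fs ! i \<in> KXY" if "i < m" for i using K that unfolding m_def by auto
  define c where "c \<sigma> = (\<Prod>i<m. (fs ! i) (\<sigma> i))" for \<sigma> :: "nat \<Rightarrow> ptree option"
  define gs where "gs \<sigma> = graft (map \<sigma> [0..<m])" for \<sigma> :: "nat \<Rightarrow> ptree option"
  have Avalid: "\<sigma> \<in> PiE {..<m} A \<Longrightarrow> \<forall>S\<in>set (map \<sigma> [0..<m]). validP S" for \<sigma>
    unfolding A_def by (auto simp: PiE_def Pi_def)
  have fPi: "finite (PiE {..<m} A)" using fA by (intro finite_PiE) auto
  have fs_eq: "fs = map (\<lambda>i U. \<Sum>a\<in>A i. (fs ! i) a * ind a U) [0..<m]"
  proof (rule nth_equalityI)
    show "length fs = length (map (\<lambda>i U. \<Sum>a\<in>A i. (fs ! i) a * ind a U) [0..<m])" by (simp add: m_def)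
  next
    fix i assume "i < length fs"
    then have i: "i < m" by (simp add: m_def)
    have eqU: "(fs ! i) U = (\<Sum>a\<in>A i. (fs ! i) a * ind a U)" for U
    proof -
      have "(\<Sum>a\<in>A i. (fs ! i) a * ind a U) = (\<Sum>a\<in>A i. if a = U then (fs ! i) U else 0)"
        by (intro sum.cong) (auto simp: ind_def)
      also have "\<dots> = (if U \<in> A i then (fs ! i) U else 0)" using fA[OF i] by simp
      also have "\<dots> = (fs ! i) U" using fiK[OF i] unfolding A_def KXY_def by auto
      finally show ?thesis by simp
    qed
    have "fs ! i = (\<lambda>U. \<Sum>a\<in>A i. (fs ! i) a * ind a U)" by (rule ext) (rule eqU)
    also have "\<dots> = map (\<lambda>i U. \<Sum>a\<in>A i. (fs ! i) a * ind a U) [0..<m] ! i" using i by simp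
    finally show "fs ! i = map (\<lambda>i U. \<Sum>a\<in>A i. (fs ! i) a * ind a U) [0..<m] ! i" .
  qed
  have mp: "mprod fs U = (\<Sum>\<sigma>\<in>PiE {..<m} A. c \<sigma> * ind (gs \<sigma>) U)" for U
  proof -
    have "mprod fs U = (\<Sum>\<sigma>\<in>PiE {..<m} A. mprod (map (\<lambda>i U. (fs ! i) (\<sigma> i) * ind (\<sigma> i) U) [0..<m]) U)"
      by (subst fs_eq, subst mprod_multilin) (use fA in auto)
    also have "\<dots> = (\<Sum>\<sigma>\<in>PiE {..<m} A. c \<sigma> * ind (gs \<sigma>) U)"
    proof (rule sum.cong[OF refl])
      fix \<sigma> assume s: "\<sigma> \<in> PiE {..<m} A"
      have "mprod (map (\<lambda>i U. (fs ! i) (\<sigma> i) * ind (\<sigma> i) U) [0..<m]) U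
            = c \<sigma> * mprod (map (\<lambda>i. ind (\<sigma> i)) [0..<m]) U"
        unfolding c_def by (rule mprod_scalar)
      also have "map (\<lambda>i. ind (\<sigma> i)) [0..<m] = map ind (map \<sigma> [0..<m])" by simp
      also have "mprod \<dots> = ind (gs \<sigma>)" unfolding gs_def using Avalid[OF s] by (rule mprod_ind)
      finally show "mprod (map (\<lambda>i U. (fs ! i) (\<sigma> i) * ind (\<sigma> i) U) [0..<m]) U = c \<sigma> * ind (gs \<sigma>) U" .
    qed
    finally show ?thesis .
  qed
  let ?B = "gs ` PiE {..<m} A"
  have sub: "{S. validP S \<and> mprod fs S \<noteq> 0 \<and> degx S \<le> degx T} \<subseteq> ?B"
  proof
    fix S assume "S \<in> {S. validP S \<and> mprod fs S \<noteq> 0 \<and> degx S \<le> degx T}"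
    then have "(\<Sum>\<sigma>\<in>PiE {..<m} A. c \<sigma> * ind (gs \<sigma>) S) \<noteq> 0" using mp by simp
    then obtain \<sigma> where "\<sigma> \<in> PiE {..<m} A" "c \<sigma> * ind (gs \<sigma>) S \<noteq> 0"
      by (rule sum.not_neutral_contains_not_neutral)
    then show "S \<in> ?B" by (auto simp: ind_def split: if_splits)
  qed
  have "phi (mprod fs) T = (\<Sum>S\<in>?B. mprod fs S * PhiO S T)"
    using phi_eq[OF mprod_KXY[OF K] _ sub] fPi by auto
  also have "\<dots> = (\<Sum>S\<in>?B. \<Sum>\<sigma>\<in>PiE {..<m} A. c \<sigma> * (ind (gs \<sigma>) S * PhiO S T))"
    by (simp add: mp sum_distrib_right mult.assoc)
  also have "\<dots> = (\<Sum>\<sigma>\<in>PiE {..<m} A. c \<sigma> * (\<Sum>S\<in>?B. ind (gs \<sigma>) S * PhiO S T))"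
    by (subst sum.swap) (simp add: sum_distrib_left)
  also have "\<dots> = (\<Sum>\<sigma>\<in>PiE {..<m} A. c \<sigma> * PhiO (gs \<sigma>) T)"
  proof (rule sum.cong[OF refl])
    fix \<sigma> assume s: "\<sigma> \<in> PiE {..<m} A"
    have "(\<Sum>S\<in>?B. ind (gs \<sigma>) S * PhiO S T) = (\<Sum>S\<in>?B. if S = gs \<sigma> then PhiO (gs \<sigma>) T else 0)"
      by (intro sum.cong) (auto simp: ind_def)
    also have "\<dots> = PhiO (gs \<sigma>) T" using fPi s by simp
    finally show "c \<sigma> * (\<Sum>S\<in>?B. ind (gs \<sigma>) S * PhiO S T) = c \<sigma> * PhiO (gs \<sigma>) T" by simp
  qed
  also have "\<dots> = (\<Sum>\<sigma>\<in>PiE {..<m} A. c \<sigma> * mprod (map (\<lambda>i. PhiO (\<sigma> i)) [0..<m]) T)"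
    unfolding gs_def PhiO_graft by (simp add: comp_def)
  also have "\<dots> = (\<Sum>\<sigma>\<in>PiE {..<m} A. mprod (map (\<lambda>i U. (fs ! i) (\<sigma> i) * PhiO (\<sigma> i) U) [0..<m]) T)"
    unfolding c_def by (simp add: mprod_scalar)
  also have "\<dots> = mprod (map (\<lambda>i U. \<Sum>a\<in>A i. (fs ! i) a * PhiO a U) [0..<m]) T"
    by (subst mprod_multilin) (use fA in auto)
  also have "map (\<lambda>i U. \<Sum>a\<in>A i. (fs ! i) a * PhiO a U) [0..<m] = map phi fs"
  proof (rule nth_equalityI)
    fix i assume "i < length (map (\<lambda>i U. \<Sum>a\<in>A i. (fs ! i) a * PhiO a U) [0..<m])"
    then have i: "i < m" by simp
    have "phi (fs ! i) U = (\<Sum>a\<in>A i. (fs ! i) a * PhiO a U)" for U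
      by (rule phi_eq[OF fiK[OF i] fA[OF i]]) (auto simp: A_def)
    then show "map (\<lambda>i U. \<Sum>a\<in>A i. (fs ! i) a * PhiO a U) [0..<m] ! i = map phi fs ! i"
      using i by (auto simp: m_def)
  qed (simp add: m_def)
  finally show ?thesis .
qed

lemma phi_mult:
  assumes K: "set fs \<subseteq> KXY"
  shows "phi (mprod fs) = mprod (map phi fs)"
proof
  fix T
  define n where "n = degx T"
  define fs' where "fs' = map (trunc n) fs"
  have K': "set fs' \<subseteq> KXY" using K trunc_KXY unfolding fs'_def by auto
  have fin': "finite {S. validP S \<and> f S \<noteq> 0}" if "f \<in> set fs'" for f
  proof -
    have "f \<in> trunc n ` set fs" using that by (simp add: fs'_def)
    then obtain f0 where f0: "f0 \<in> set fs" "f = trunc n f0" by blast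
    have "{S. validP S \<and> f S \<noteq> 0} \<subseteq> {S. validP S \<and> f0 S \<noteq> 0 \<and> degx S \<le> n}"
      unfolding f0(2) trunc_def by auto
    moreover have "f0 \<in> KXY" using K f0(1) by blast
    then have "finite {S. validP S \<and> f0 S \<noteq> 0 \<and> degx S \<le> n}" by (rule supp_finite)
    ultimately show ?thesis by (rule finite_subset)
  qed
  have loc: "mprod fs S = mprod fs' S" if "degx S \<le> n" for S
  proof (rule mprod_local[OF _ that])
    fix i S assume "i < length fs" "validP S" "degx S \<le> n"
    then show "(fs ! i) S = (fs' ! i) S" by (simp add: fs'_def trunc_def)
  qed (simp add: fs'_def)
  have e1: "{S. validP S \<and> mprod fs S \<noteq> 0 \<and> degx S \<le> n} = {S. validP S \<and> mprod fs' S \<noteq> 0 \<and> degx S \<le> n}"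
    using loc by auto
  have "phi (mprod fs) T = (\<Sum>S\<in>{S. validP S \<and> mprod fs S \<noteq> 0 \<and> degx S \<le> n}. mprod fs S * PhiO S T)"
    unfolding phi_def n_def ..
  also have "\<dots> = (\<Sum>S\<in>{S. validP S \<and> mprod fs' S \<noteq> 0 \<and> degx S \<le> n}. mprod fs' S * PhiO S T)"
    unfolding e1 using loc by (intro sum.cong refl) simp
  also have "\<dots> = phi (mprod fs') T"
    unfolding phi_def n_def ..
  finally have "phi (mprod fs) T = phi (mprod fs') T" .
  also have "\<dots> = mprod (map phi fs') T" using phi_fin[OF K' fin'] by blast
  also have "\<dots> = mprod (map phi fs) T"
  proof (rule mprod_local[of _ _ _ n])
    fix i S assume i: "i < length (map phi fs')" and "validP S" and d: "degx S \<le> n"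
    then have "i < length fs" by (simp add: fs'_def)
    then show "(map phi fs' ! i) S = (map phi fs ! i) S" using phi_trunc[OF d] by (simp add: fs'_def)
  qed (simp_all add: fs'_def n_def)
  finally show "phi (mprod fs) T = mprod (map phi fs) T" .
qed


lemma phi_small:
  assumes "\<And>S. validP S \<Longrightarrow> degx S \<le> n \<Longrightarrow> w S = 0" "degx T \<le> n"
  shows "phi w T = 0"
proof -
  have e: "{S. validP S \<and> w S \<noteq> 0 \<and> degx S \<le> degx T} = {}" using assms by force
  show ?thesis unfolding phi_def e by simp
qed

lemma phi_diff: "u \<in> KXY \<Longrightarrow> f \<in> KXY \<Longrightarrow> phi (\<lambda>S. u S - f S) = (\<lambda>T. phi u T - phi f T)"
  using phi_lin[of u f 1 "-1"] by simp

lemma phi_cont: "xadic_continuous phi"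
  unfolding xadic_continuous_def
proof (intro ballI allI impI)
  fix f :: "ptree option \<Rightarrow> 'a" and e :: real
  assume f: "f \<in> KXY" and e: "0 < e"
  obtain n where n: "(1/2::real) ^ n < e" using real_arch_pow_inv[OF e, of "1/2"] by auto
  show "\<exists>d>0. \<forall>u\<in>KXY. absx (\<lambda>S. u S - f S) < d \<longrightarrow> absx (\<lambda>S. phi u S - phi f S) < e"
  proof (intro exI[of _ "(1/2::real)^n"] conjI ballI impI)
    fix u :: "ptree option \<Rightarrow> 'a" assume u: "u \<in> KXY" and a: "absx (\<lambda>S. u S - f S) < (1/2)^n"
    have v1: "\<And>S. \<not> validP S \<Longrightarrow> u S - f S = 0" using u f unfolding KXY_def by auto
    have z: "u S - f S = 0" if "validP S" "degx S \<le> n" for S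
      using absx_small[of "\<lambda>S. u S - f S", OF _ a that] v1 by auto
    have z2: "phi u T - phi f T = 0" if "validP T" "degx T \<le> n" for T
      using phi_small[of n "\<lambda>S. u S - f S" T] z that phi_diff[OF u f] by (metis (no_types, lifting))
    have v2: "\<And>S. \<not> validP S \<Longrightarrow> phi u S - phi f S = 0"
      using phi_K[OF u] phi_K[OF f] unfolding KXY_def by auto
    have "absx (\<lambda>S. phi u S - phi f S) \<le> (1/2)^(Suc n)"
      by (rule absx_le) (use v2 z2 in auto)
    also have "\<dots> < (1/2)^n" by simp
    also have "\<dots> < e" by (rule n)
    finally show "absx (\<lambda>S. phi u S - phi f S) < e" .
  qed simp
qed

lemma psi_tree:
  assumes ah: "alg_hom \<psi>" and px: "\<psi> varx = g" and py: "\<psi> vary = h"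
  shows "reduced t \<Longrightarrow> \<psi> (ind (Some t)) = Phit t"
proof (induction t)
  case (Leaf l)
  then show ?case using px py by (cases l) (auto simp: varx_def vary_def)
next
  case (Node ts)
  have len: "2 \<le> length ts" and red: "\<forall>t\<in>set ts. reduced t" using Node.prems by auto
  have fl: "flt (map Some ts) = ts" by (induction ts) (auto simp: flt_def)
  have gr: "graft (map Some ts) = Some (Node ts)"
    unfolding graft_flt fl using len by (auto split: list.splits)
  have e1: "(ind (Some (Node ts)) :: ptree option \<Rightarrow> 'a) = mprod (map ind (map Some ts))"
  proof -
    have vs: "\<forall>S\<in>set (map Some ts). validP S" using red by (auto simp: validP_def)
    have "mprod (map ind (map Some ts)) = (ind (graft (map Some ts)) :: ptree option \<Rightarrow> 'a)"
      by (rule mprod_ind[OF vs])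
    then show ?thesis using gr by simp
  qed
  have e2: "\<psi> (mprod (map ind (map Some ts))) = mprod (map \<psi> (map ind (map Some ts)))"
  proof -
    have mult: "\<forall>fs. 2 \<le> length fs \<longrightarrow> set fs \<subseteq> KXY \<longrightarrow> \<psi> (mprod fs) = mprod (map \<psi> fs)"
      using ah unfolding alg_hom_def by blast
    have sK: "set (map ind (map Some ts)) \<subseteq> (KXY :: (ptree option \<Rightarrow> 'a) set)"
      using red by (auto intro!: ind_KXY simp: validP_def)
    have l2: "2 \<le> length (map ind (map Some ts))" using len by simp
    show ?thesis using mult[rule_format, OF l2 sK] .
  qed
  have e3: "map \<psi> (map ind (map Some ts)) = map Phit ts"
    using Node.IH red by auto
  have "\<psi> (ind (Some (Node ts))) = mprod (map Phit ts)" unfolding e1 e2 e3 ..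
  then show ?case by simp
qed

lemma psi_ind:
  assumes ah: "alg_hom \<psi>" and px: "\<psi> varx = g" and py: "\<psi> vary = h" and v: "validP S"
  shows "\<psi> (ind S) = PhiO S"
proof (cases S)
  case None
  then show ?thesis using ah unfolding alg_hom_def by (simp add: oneP_def)
next
  case (Some t)
  then show ?thesis using psi_tree[OF ah px py] v by (simp add: validP_def)
qed

lemma finsum_KXY:
  assumes "finite B" "\<forall>S\<in>B. validP S"
  shows "(\<lambda>T. \<Sum>S\<in>B. c S * ind S T) \<in> KXY"
proof -
  have a: "(\<Sum>S\<in>B. c S * ind S T) = (if T \<in> B then c T else 0)" for T
  proof -
    have "(\<Sum>S\<in>B. c S * ind S T) = (\<Sum>S\<in>B. if S = T then c T else 0)"
      by (intro sum.cong) (auto simp: ind_def)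
    then show ?thesis using assms(1) by simp
  qed
  have "{S. validP S \<and> (\<Sum>Sa\<in>B. c Sa * ind Sa S) \<noteq> 0 \<and> degx S = n} \<subseteq> B" for n
    using a by (auto split: if_splits)
  then show ?thesis unfolding KXY_def using a assms by (auto intro: finite_subset)
qed

lemma psi_finsum:
  assumes ah: "alg_hom \<psi>" and px: "\<psi> varx = g" and py: "\<psi> vary = h"
  shows "finite B \<Longrightarrow> \<forall>S\<in>B. validP S \<Longrightarrow>
     \<psi> (\<lambda>T. \<Sum>S\<in>B. c S * ind S T) = (\<lambda>T. \<Sum>S\<in>B. c S * PhiO S T)"
proof (induction B rule: finite_induct)
  case empty
  have oK: "(oneP :: _ \<Rightarrow> 'a) \<in> KXY" unfolding oneP_def by (rule ind_KXY) (simp add: validP_def)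
  have lin: "\<forall>f\<in>KXY. \<forall>g\<in>KXY. \<forall>a b. \<psi> (\<lambda>S. a * f S + b * g S) = (\<lambda>S. a * \<psi> f S + b * \<psi> g S)"
    using ah unfolding alg_hom_def by blast
  have "\<psi> (\<lambda>S. 0 * oneP S + 0 * oneP S) = (\<lambda>S. 0 * \<psi> oneP S + 0 * \<psi> oneP S)"
    using lin[rule_format, OF oK oK, of 0 0] .
  then show ?case by simp
next
  case (insert x B)
  have xv: "validP x" and Bv: "\<forall>S\<in>B. validP S" using insert.prems by auto
  have K1: "ind x \<in> KXY" using ind_KXY[OF xv] .
  have K2: "(\<lambda>T. \<Sum>S\<in>B. c S * ind S T) \<in> KXY" using finsum_KXY[OF insert.hyps(1) Bv] .
  have e: "(\<lambda>T. \<Sum>S\<in>insert x B. c S * ind S T) = (\<lambda>T. c x * ind x T + 1 * (\<Sum>S\<in>B. c S * ind S T))"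
    using insert.hyps by simp
  have "\<psi> (\<lambda>T. c x * ind x T + 1 * (\<Sum>S\<in>B. c S * ind S T)) =
        (\<lambda>T. c x * \<psi> (ind x) T + 1 * \<psi> (\<lambda>T. \<Sum>S\<in>B. c S * ind S T) T)"
  proof -
    have lin: "\<forall>f\<in>KXY. \<forall>g\<in>KXY. \<forall>a b. \<psi> (\<lambda>S. a * f S + b * g S) = (\<lambda>S. a * \<psi> f S + b * \<psi> g S)"
      using ah unfolding alg_hom_def by blast
    show ?thesis using lin[rule_format, OF K1 K2, of "c x" 1] by simp
  qed
  then show ?case using e insert.IH[OF Bv] psi_ind[OF ah px py xv] insert.hyps by simp
qed

lemma psi_unique:
  assumes ah: "alg_hom \<psi>" and px: "\<psi> varx = g" and py: "\<psi> vary = h" and pc: "xadic_continuous \<psi>"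
    and f: "f \<in> KXY"
  shows "\<psi> f = phi f"
proof
  fix T
  have psiK: "\<psi> u \<in> KXY" if "u \<in> KXY" for u using ah that unfolding alg_hom_def by blast
  show "\<psi> f T = phi f T"
  proof (cases "validP T")
    case False
    then show ?thesis using psiK[OF f] phi_K[OF f] unfolding KXY_def by auto
  next
    case True
    define N where "N = degx T"
    have eN: "(0::real) < (1/2)^N" by simp
    obtain d where d: "d > 0" "\<forall>u\<in>KXY. absx (\<lambda>S. u S - f S) < d \<longrightarrow> absx (\<lambda>S. \<psi> u S - \<psi> f S) < (1/2)^N"
      using pc f eN unfolding xadic_continuous_def by blast
    obtain n0 where n0: "(1/2::real) ^ n0 < d" using real_arch_pow_inv[OF d(1), of "1/2"] by auto
    define n where "n = max N n0"
    define fn where "fn = trunc n f"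
    have fnK: "fn \<in> KXY" unfolding fn_def using trunc_KXY[OF f] .
    have v1: "\<And>S. \<not> validP S \<Longrightarrow> fn S - f S = 0" using fnK f unfolding KXY_def by auto
    have "absx (\<lambda>S. fn S - f S) \<le> (1/2)^(Suc n)"
      by (rule absx_le) (use v1 in \<open>auto simp: fn_def trunc_def\<close>)
    also have "\<dots> \<le> (1/2)^n0" unfolding n_def by (rule power_decreasing) auto
    also have "\<dots> < d" by (rule n0)
    finally have "absx (\<lambda>S. \<psi> fn S - \<psi> f S) < (1/2)^N" using d(2) fnK by blast
    moreover have "\<And>S. \<not> validP S \<Longrightarrow> \<psi> fn S - \<psi> f S = 0"
      using psiK[OF fnK] psiK[OF f] unfolding KXY_def by auto
    ultimately have "\<psi> fn T - \<psi> f T = 0" using absx_small[of "\<lambda>S. \<psi> fn S - \<psi> f S" N T] True N_def by auto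
    then have "\<psi> f T = \<psi> fn T" by simp
    also have "\<psi> fn = phi fn"
    proof -
      define B where "B = {S. validP S \<and> fn S \<noteq> 0}"
      have Bsub: "B \<subseteq> {S. validP S \<and> f S \<noteq> 0 \<and> degx S \<le> n}" unfolding B_def fn_def trunc_def by auto
      have fB: "finite B" using finite_subset[OF Bsub supp_finite[OF f]] .
      have Bv: "\<forall>S\<in>B. validP S" unfolding B_def by auto
      have fn_eq: "fn = (\<lambda>T. \<Sum>S\<in>B. fn S * ind S T)"
      proof
        fix U
        have "(\<Sum>S\<in>B. fn S * ind S U) = (\<Sum>S\<in>B. if S = U then fn U else 0)"
          by (intro sum.cong) (auto simp: ind_def)
        also have "\<dots> = (if U \<in> B then fn U else 0)" using fB by simp
        also have "\<dots> = fn U" using fnK unfolding B_def KXY_def by auto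
        finally show "fn U = (\<Sum>S\<in>B. fn S * ind S U)" by simp
      qed
      have "\<psi> fn = (\<lambda>T. \<Sum>S\<in>B. fn S * PhiO S T)"
        by (subst fn_eq) (rule psi_finsum[OF ah px py fB Bv])
      also have "\<dots> = phi fn"
      proof
        fix U show "(\<Sum>S\<in>B. fn S * PhiO S U) = phi fn U"
          by (rule phi_eq[OF fnK fB, symmetric]) (auto simp: B_def)
      qed
      finally show ?thesis .
    qed
    also have "phi fn T = phi f T" unfolding fn_def by (rule phi_trunc) (simp add: n_def N_def)
    finally show ?thesis .
  qed
qed

end

theorem proposition3p1:
  fixes g h :: "ptree option \<Rightarrow> 'a::field"
  assumes "g \<in> KXY" and "h \<in> KXY" and "ordx g \<ge> 1"
  shows "\<exists>\<phi>. alg_hom \<phi> \<and> \<phi> varx = g \<and> \<phi> vary = h \<and> xadic_continuous \<phi> \<and>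
           (\<forall>\<psi>. alg_hom \<psi> \<and> \<psi> varx = g \<and> \<psi> vary = h \<and> xadic_continuous \<psi>
                  \<longrightarrow> (\<forall>f\<in>KXY. \<psi> f = \<phi> f))"
proof -
  have gdeg: "1 \<le> degx S" if gS: "g S \<noteq> 0" for S
  proof -
    have v: "validP S" using gS assms(1) unfolding KXY_def by blast
    have nz: "g \<noteq> (\<lambda>_. 0)" using gS by auto
    let ?L = "LEAST k. \<exists>S. validP S \<and> g S \<noteq> 0 \<and> degx S = k"
    have "1 \<le> enat ?L" using assms(3) nz unfolding ordx_def by simp
    then have "1 \<le> ?L" by (simp add: one_enat_def)
    moreover have "?L \<le> degx S" using gS v by (intro Least_le) blast
    ultimately show ?thesis by simp
  qed
  interpret subst g h using assms(1,2) gdeg by unfold_locales auto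
  have ah: "alg_hom phi"
    unfolding alg_hom_def
  proof (intro conjI ballI allI impI)
    show "phi f \<in> KXY" if "f \<in> KXY" for f using phi_K that .
    show "phi (\<lambda>S. a * f S + b * k S) = (\<lambda>S. a * phi f S + b * phi k S)"
      if "f \<in> KXY" "k \<in> KXY" for f k a b using phi_lin that by blast
    show "phi oneP = oneP" unfolding oneP_def by (subst phi_ind) (auto simp: validP_def oneP_def)
    show "phi (mprod fs) = mprod (map phi fs)" if "set fs \<subseteq> KXY" for fs using phi_mult that .
  qed
  have px: "phi varx = g" unfolding varx_def by (subst phi_ind) (auto simp: validP_def)
  have py: "phi vary = h" unfolding vary_def by (subst phi_ind) (auto simp: validP_def)
  show ?thesis
    using ah px py phi_cont psi_unique by blast
qed

end
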